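(* For the system $$u_{0,0}-v_{1,1}=0,\qquad (u_{1,0}-u_{0,0})(v_{1,0}-u_{0,0})-(u_{0,1}-u_{0,0})(v_{0,1}-u_{0,0})=0,$$ the following second order flow is a symmetry: $$\frac{\partial u_{0,0}}{\partial s_2}=(u_{0,0}-v_{1,0})\big(u_{2,0}v_{2,0}-(u_{2,0}+v_{2,0}-v_{0,0})u_{1,0}+(u_{1,0}-v_{0,0})u_{0,0}\big),$$ $$\frac{\partial v_{0,0}}{\partial s_2}=(u_{-1,0}-v_{0,0})\big(u_{-2,0}v_{-2,0}-(u_{-2,0}+v_{-2,0}-u_{0,0})v_{-1,0}+(v_{-1,0}-u_{0,0})v_{0,0}\big).$$
   Context: Unknowns $u,v$ on $\mathbb Z^2$, $u_{i,j}=u(n+i,m+j)$, similarly $v$. Shifts $\mathcal S:n\mapsto n+1$, $\mathcal T:m\mapsto m+1$. For a quad system $\boldsymbol Q(\boldsymbol u_{0,0},\boldsymbol u_{1,0},\boldsymbol u_{0,1},\boldsymbol u_{1,1})=\boldsymbol 0$ with $\boldsymbol u=(u,v)$ and Jacobians $\mathrm Q_{(p,q)}=\partial\boldsymbol Q/\partial\boldsymbol u_{p,q}$, a vector function $\boldsymbol F=(F^{(1)},F^{(2)})$ of finitely many shifts of $\boldsymbol u$ is a symmetry, written $\partial_t u_{0,0}=F^{(1)}$, $\partial_t v_{0,0}=F^{(2)}$, if $\mathrm Q_{(0,0)}\boldsymbol F+\mathrm Q_{(1,0)}\mathcal S(\boldsymbol F)+\mathrm Q_{(0,1)}\mathcal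 T(\boldsymbol F)+\mathrm Q_{(1,1)}\mathcal S\mathcal T(\boldsymbol F)=\boldsymbol 0$ holds on all solutions of the system. *)

theory Defs
  imports "HOL-Analysis.Analysis"
begin

type_synonym field_pt = "complex \<times> complex"
type_synonym quad_arg = "field_pt \<times> field_pt \<times> field_pt \<times> field_pt"
type_synonym lattice_fn = "int \<Rightarrow> int \<Rightarrow> complex"

definition pt :: "lattice_fn \<Rightarrow> lattice_fn \<Rightarrow> int \<Rightarrow> int \<Rightarrow> field_pt" where
  "pt u v n m = (u n m, v n m)"

definition quad_at :: "lattice_fn \<Rightarrow> lattice_fn \<Rightarrow> int \<Rightarrow> int \<Rightarrow> quad_arg" where
  "quad_at u v n m = (pt u v n m, pt u v (n+1) m, pt u v n (m+1), pt u v (n+1) (m+1))"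

text \<open>F is a symmetry iff on every solution
  of the system the linearisation
  Q_(0,0) F + Q_(1,0) S(F) + Q_(0,1) T(F) + Q_(1,1) ST(F)
  vanishes at every lattice point; the Jacobians are encoded by the Frechet
  derivative of Q at the quadrilateral.\<close>
definition quad_symmetry ::
  "(quad_arg \<Rightarrow> field_pt) \<Rightarrow> (lattice_fn \<Rightarrow> lattice_fn \<Rightarrow> int \<Rightarrow> int \<Rightarrow> field_pt) \<Rightarrow> bool" where
  "quad_symmetry Q F \<longleftrightarrow>
     (\<forall>u v. (\<forall>n m. Q (quad_at u v n m) = 0) \<longrightarrow>
        (\<forall>n m. \<exists>D. (Q has_derivative D) (at (quad_at u v n m)) \<and>
            D (F u v n m, F u v (n+1) m, F u v n (m+1), F u v (n+1) (m+1)) = 0))"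

fun Qsys :: "quad_arg \<Rightarrow> field_pt" where
  "Qsys ((u00, v00), (u10, v10), (u01, v01), (u11, v11)) =
     (u00 - v11,
      (u10 - u00) * (v10 - u00) - (u01 - u00) * (v01 - u00))"

definition Fflow :: "lattice_fn \<Rightarrow> lattice_fn \<Rightarrow> int \<Rightarrow> int \<Rightarrow> field_pt" where
  "Fflow u v n m =
     ((u n m - v (n+1) m) *
        (u (n+2) m * v (n+2) m - (u (n+2) m + v (n+2) m - v n m) * u (n+1) m
         + (u (n+1) m - v n m) * u n m),
      (u (n-1) m - v n m) *
        (u (n-2) m * v (n-2) m - (u (n-2) m + v (n-2) m - u n m) * v (n-1) m
         + (v (n-1) m - u n m) * v n m))"

end

theory Submission
  imports Defs
begin
lemma Qsys_eq: "Qsys = (\<lambda>q. (fst (fst q) - snd (snd (snd (snd q))),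
  (fst (fst (snd q)) - fst (fst q)) * (snd (fst (snd q)) - fst (fst q)) -
  (fst (fst (snd (snd q))) - fst (fst q)) * (snd (fst (snd (snd q))) - fst (fst q))))"
  by (rule ext, cases rule: Qsys.cases) auto

definition Dq :: "quad_arg \<Rightarrow> quad_arg \<Rightarrow> field_pt" where
 "Dq p h = (fst (fst h) - snd (snd (snd (snd h))),
  (fst (fst (snd h)) - fst (fst h)) * (snd (fst (snd p)) - fst (fst p))
  + (fst (fst (snd p)) - fst (fst p)) * (snd (fst (snd h)) - fst (fst h)) -
  ((fst (fst (snd (snd h))) - fst (fst h)) * (snd (fst (snd (snd p))) - fst (fst p))
  + (fst (fst (snd (snd p))) - fst (fst p)) * (snd (fst (snd (snd h))) - fst (fst h))))"

lemma Qsys_deriv: "(Qsys has_derivative Dq p) (at p)"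
  unfolding Qsys_eq
  apply (rule derivative_eq_intros refl)+
  apply (auto simp: Dq_def fun_eq_iff algebra_simps)
  done

theorem mainTheorem10:
  shows "quad_symmetry Qsys Fflow"
  unfolding quad_symmetry_def
proof (intro allI impI)
  fix u v assume H: "\<forall>n m. Qsys (quad_at u v n m) = 0"
  have hv: "v n m = u (n-1) (m-1)" for n m
    using H[rule_format, of "n-1" "m-1"] by (simp add: quad_at_def pt_def zero_prod_def)
  have C: "(u (n+1) m - u n m) * (u n (m-1) - u n m) = (u n (m+1) - u n m) * (u (n-1) m - u n m)" for n m
    using H[rule_format, of n m] by (simp add: quad_at_def pt_def hv zero_prod_def)
  fix n m
  define b where "b i j = u (n+i) (m+j)" for i j
  have ub: "u p q = b (p - n) (q - m)" for p q by (simp add: b_def)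
  have Cb: "(b (i+1) j - b i j) * (b i (j-1) - b i j) = (b i (j+1) - b i j) * (b (i-1) j - b i j)" for i j
    using C[of "n+i" "m+j"] by (simp add: b_def algebra_simps)
  note c00 = Cb[of 0 0, simplified]
  note c10 = Cb[of 1 0, simplified]
  note cm0 = Cb[of "-1" 0, simplified]
  note c01 = Cb[of 0 1, simplified]
  note c0m = Cb[of 0 "-1", simplified]
  note c11 = Cb[of 1 1, simplified]
  note cmm = Cb[of "-1" "-1", simplified]
  note c20 = Cb[of 2 0, simplified]
  note cm20 = Cb[of "-2" 0, simplified]
  show "\<exists>D. (Qsys has_derivative D) (at (quad_at u v n m)) \<and>
            D (Fflow u v n m, Fflow u v (n+1) m, Fflow u v n (m+1), Fflow u v (n+1) (m+1)) = 0"
    apply (rule exI[of _ "Dq (quad_at u v n m)"])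
    apply (simp add: Qsys_deriv Dq_def quad_at_def pt_def Fflow_def hv zero_prod_def)
    apply (simp only: ub)
    apply simp
    apply (intro conjI)
    using c00 c10 cm0 apply algebra
    using c00 c10 cm0 c01 c0m c11 cmm c20 cm20 apply algebra
    done
qed
end
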